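(* Let $\mathfrak F=(X,\parallel,Y,S_\vee)$ be a frame satisfying axioms (F0)–(F4). Then for every $x\in X$, $$S_\vee x=\overline{\eta}_S(\Gamma x)=\bigcup_{z\in\Gamma x}S_\vee z=\Gamma(\widehat\nu(x)).$$
   Context: A polarity is $(X,\parallel,Y)$ with $X,Y$ nonempty sets and ${\parallel}\subseteq X\times Y$; $I=(X\times Y)\setminus{\parallel}$. For $U\subseteq X$, $U'=\{y\in Y:\forall x\in U\;x\parallel y\}$; for $V\subseteq Y$, $V'=\{x\in X:\forall y\in V\;x\parallel y\}$. $A\subseteq X$ is stable if $A=A''$; $B\subseteq Y$ is co-stable if $B=B''$; $\mathcal G(X),\mathcal G(Y)$ are the complete lattices of stable/co-stable sets (meets = intersections, joins $\bigvee_jA_j=(\bigcup_jA_j)''$). Preorders: $x\preceq z$ iff $\{x\}'\subseteq\{z\}'$ on $X$; $y\preceq v$ iff $\{y\}'\subseteq\{v\}'$ on $Y$; the polarity is separated if both are partial orders (then written $\leq$). For a point $u$, $\Gamma u=\{w:u\preceq w\}$ (same sort). A closed element of $\mathcal G(X)$ is a set $\Gamma x$ ($x\in X$), of $\mathcal G(Y)$ a set $\Gamma y$ ($y\in Y$). A frame is $\mathfrak F=(X,\parallel,Y,S_\vee)$ with $S_\vee\subseteq Y\times X$; $S_\vee x=\{y: yS_\vee x\}$, $yS_\vee=\{x:yS_\vee x\}$; the Galois dual relation $S'_\vee\subseteq X\times X$ is $zS'_\vee x$ iff $\forall y\in Y(yS_\vee x\Rightarrow z\parallel y)$. Axioms: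 (F0) $\forall x\exists y\;xIy$ and $\forall y\exists x\;xIy$; (F1) the polarity is separated; (F2) for each $x\in X$, $S_\vee x$ is a closed element of $\mathcal G(Y)$; (F3) for each $y\in Y$, $yS_\vee$ is a down-set of $(X,\leq)$; (F4) for each $x$, $\{z: zS'_\vee x\}\in\mathcal G(X)$ and for each $z$, $\{x:zS'_\vee x\}\in\mathcal G(X)$. By (F1),(F2), $\widehat\nu(x)$ denotes the unique $y\in Y$ with $S_\vee x=\Gamma y$. For $A\in\mathcal G(X)$, $\overline\eta_S(A)=(\bigcup_{x\in A}S_\vee x)''\in\mathcal G(Y)$. *)

theory Defs
  imports Main
begin

text \<open>A polarity (X, par, Y): X :: 'x set, Y :: 'y set, par :: 'x \<Rightarrow> 'y \<Rightarrow> bool.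
  A frame adds S :: 'y \<Rightarrow> 'x \<Rightarrow> bool (the relation S_vee \<subseteq> Y \<times> X).\<close>

definition primeX :: "'y set \<Rightarrow> ('x \<Rightarrow> 'y \<Rightarrow> bool) \<Rightarrow> 'x set \<Rightarrow> 'y set" where
  "primeX Y par U = {y \<in> Y. \<forall>x\<in>U. par x y}"

definition primeY :: "'x set \<Rightarrow> ('x \<Rightarrow> 'y \<Rightarrow> bool) \<Rightarrow> 'y set \<Rightarrow> 'x set" where
  "primeY X par V = {x \<in> X. \<forall>y\<in>V. par x y}"

definition stableX :: "'x set \<Rightarrow> ('x \<Rightarrow> 'y \<Rightarrow> bool) \<Rightarrow> 'y set \<Rightarrow> 'x set \<Rightarrow> bool" where
  "stableX X par Y A \<longleftrightarrow> A \<subseteq> X \<and> A = primeY X par (primeX Y par A)"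

definition costableY :: "'x set \<Rightarrow> ('x \<Rightarrow> 'y \<Rightarrow> bool) \<Rightarrow> 'y set \<Rightarrow> 'y set \<Rightarrow> bool" where
  "costableY X par Y B \<longleftrightarrow> B \<subseteq> Y \<and> B = primeX Y par (primeY X par B)"

definition leqX :: "'x set \<Rightarrow> ('x \<Rightarrow> 'y \<Rightarrow> bool) \<Rightarrow> 'y set \<Rightarrow> 'x \<Rightarrow> 'x \<Rightarrow> bool" where
  "leqX X par Y x z \<longleftrightarrow> primeX Y par {x} \<subseteq> primeX Y par {z}"

definition leqY :: "'x set \<Rightarrow> ('x \<Rightarrow> 'y \<Rightarrow> bool) \<Rightarrow> 'y set \<Rightarrow> 'y \<Rightarrow> 'y \<Rightarrow> bool" where
  "leqY X par Y y v \<longleftrightarrow> primeY X par {y} \<subseteq> primeY X par {v}"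

definition GammaX :: "'x set \<Rightarrow> ('x \<Rightarrow> 'y \<Rightarrow> bool) \<Rightarrow> 'y set \<Rightarrow> 'x \<Rightarrow> 'x set" where
  "GammaX X par Y x = {w \<in> X. leqX X par Y x w}"

definition GammaY :: "'x set \<Rightarrow> ('x \<Rightarrow> 'y \<Rightarrow> bool) \<Rightarrow> 'y set \<Rightarrow> 'y \<Rightarrow> 'y set" where
  "GammaY X par Y y = {v \<in> Y. leqY X par Y y v}"

definition separated :: "'x set \<Rightarrow> ('x \<Rightarrow> 'y \<Rightarrow> bool) \<Rightarrow> 'y set \<Rightarrow> bool" where
  "separated X par Y \<longleftrightarrow>
     (\<forall>x\<in>X. \<forall>z\<in>X. leqX X par Y x z \<and> leqX X par Y z x \<longrightarrow> x = z) \<and>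
     (\<forall>y\<in>Y. \<forall>v\<in>Y. leqY X par Y y v \<and> leqY X par Y v y \<longrightarrow> y = v)"

definition Sx :: "'y set \<Rightarrow> ('y \<Rightarrow> 'x \<Rightarrow> bool) \<Rightarrow> 'x \<Rightarrow> 'y set" where
  "Sx Y S x = {y \<in> Y. S y x}"

definition yS :: "'x set \<Rightarrow> ('y \<Rightarrow> 'x \<Rightarrow> bool) \<Rightarrow> 'y \<Rightarrow> 'x set" where
  "yS X S y = {x \<in> X. S y x}"

definition Sdual :: "'y set \<Rightarrow> ('x \<Rightarrow> 'y \<Rightarrow> bool) \<Rightarrow> ('y \<Rightarrow> 'x \<Rightarrow> bool) \<Rightarrow> 'x \<Rightarrow> 'x \<Rightarrow> bool" where
  "Sdual Y par S z x \<longleftrightarrow> (\<forall>y\<in>Y. S y x \<longrightarrow> par z y)"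

definition frame :: "'x set \<Rightarrow> ('x \<Rightarrow> 'y \<Rightarrow> bool) \<Rightarrow> 'y set \<Rightarrow> ('y \<Rightarrow> 'x \<Rightarrow> bool) \<Rightarrow> bool" where
  "frame X par Y S \<longleftrightarrow>
     X \<noteq> {} \<and> Y \<noteq> {} \<and>
     \<comment> \<open>S_vee \<subseteq> Y \<times> X\<close>
     (\<forall>y x. S y x \<longrightarrow> y \<in> Y \<and> x \<in> X) \<and>
     \<comment> \<open>(F0)\<close>
     (\<forall>x\<in>X. \<exists>y\<in>Y. \<not> par x y) \<and> (\<forall>y\<in>Y. \<exists>x\<in>X. \<not> par x y) \<and>
     \<comment> \<open>(F1)\<close>
     separated X par Y \<and>
     \<comment> \<open>(F2)\<close>
     (\<forall>x\<in>X. \<exists>y\<in>Y. Sx Y S x = GammaY X par Y y) \<and>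
     \<comment> \<open>(F3)\<close>
     (\<forall>y\<in>Y. \<forall>x\<in>X. \<forall>z\<in>X. z \<in> yS X S y \<and> leqX X par Y x z \<longrightarrow> x \<in> yS X S y) \<and>
     \<comment> \<open>(F4)\<close>
     (\<forall>x\<in>X. stableX X par Y {z \<in> X. Sdual Y par S z x}) \<and>
     (\<forall>z\<in>X. stableX X par Y {x \<in> X. Sdual Y par S z x})"

definition nuhat :: "'x set \<Rightarrow> ('x \<Rightarrow> 'y \<Rightarrow> bool) \<Rightarrow> 'y set \<Rightarrow> ('y \<Rightarrow> 'x \<Rightarrow> bool) \<Rightarrow> 'x \<Rightarrow> 'y" where
  "nuhat X par Y S x = (THE y. y \<in> Y \<and> Sx Y S x = GammaY X par Y y)"

definition etabar :: "'x set \<Rightarrow> ('x \<Rightarrow> 'y \<Rightarrow> bool) \<Rightarrow> 'y set \<Rightarrow> ('y \<Rightarrow> 'x \<Rightarrow> bool) \<Rightarrow> 'x set \<Rightarrow> 'y set" where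
  "etabar X par Y S A = primeX Y par (primeY X par (\<Union>x\<in>A. Sx Y S x))"

end

theory Submission
  imports Defs
begin

lemma gammaY_eq: "GammaY X par Y y = primeX Y par (primeY X par {y})"
  unfolding GammaY_def leqY_def primeX_def primeY_def by auto

lemma triple: "V \<subseteq> X \<Longrightarrow> primeX Y par (primeY X par (primeX Y par V)) = primeX Y par V"
  unfolding primeX_def primeY_def by blast

theorem lemma3p10:
  assumes "frame X par Y S"
    and "x \<in> X"
  shows "Sx Y S x = etabar X par Y S (GammaX X par Y x)
       \<and> etabar X par Y S (GammaX X par Y x) = (\<Union>z\<in>GammaX X par Y x. Sx Y S z)
       \<and> (\<Union>z\<in>GammaX X par Y x. Sx Y S z) = GammaY X par Y (nuhat X par Y S x)"
proof -
  note F = assms(1)[unfolded frame_def]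
  obtain y0 where y0: "y0 \<in> Y" "Sx Y S x = GammaY X par Y y0" using F assms(2) by blast
  have U: "(\<Union>z\<in>GammaX X par Y x. Sx Y S z) = Sx Y S x"
  proof
    show "(\<Union>z\<in>GammaX X par Y x. Sx Y S z) \<subseteq> Sx Y S x"
    proof
      fix y assume "y \<in> (\<Union>z\<in>GammaX X par Y x. Sx Y S z)"
      then obtain z where z: "z \<in> X" "leqX X par Y x z" "y \<in> Y" "S y z"
        unfolding GammaX_def Sx_def by auto
      then have "x \<in> yS X S y" using F assms(2) unfolding yS_def by blast
      then show "y \<in> Sx Y S x" using z unfolding yS_def Sx_def by auto
    qed
    have "x \<in> GammaX X par Y x" using assms(2) unfolding GammaX_def leqX_def by auto
    then show "Sx Y S x \<subseteq> (\<Union>z\<in>GammaX X par Y x. Sx Y S z)" by auto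
  qed
  have E: "etabar X par Y S (GammaX X par Y x) = Sx Y S x"
  proof -
    have "primeY X par {y0} \<subseteq> X" unfolding primeY_def by auto
    then show ?thesis unfolding etabar_def U y0(2) gammaY_eq using triple by metis
  qed
  have refl: "\<And>y. y \<in> Y \<Longrightarrow> y \<in> GammaY X par Y y" unfolding GammaY_def leqY_def by auto
  have N: "nuhat X par Y S x = y0"
    unfolding nuhat_def
  proof (rule the_equality)
    show "y0 \<in> Y \<and> Sx Y S x = GammaY X par Y y0" using y0 by auto
  next
    fix y assume h: "y \<in> Y \<and> Sx Y S x = GammaY X par Y y"
    then have "y \<in> GammaY X par Y y0" "y0 \<in> GammaY X par Y y" using refl y0 by auto
    then have "leqY X par Y y0 y" "leqY X par Y y y0" unfolding GammaY_def by auto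
    then show "y = y0" using F h y0(1) unfolding separated_def by blast
  qed
  show ?thesis using U E N y0 by simp
qed

end
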